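(* Let $n\geq 1$ and $x^s\in\mathbb{C}^n\setminus\{0\}$. Define $g:\mathbb{C}^n\to\mathbb{R}$ by $$g(x)=\|x\|^4-\|x\|^2\|x^s\|^2-|\langle x,x^s\rangle|^2+\|x^s\|^4,$$ viewed as a smooth function of the $2n$ real coordinates of $x$ (identifying $\mathbb{C}^n$ with $\mathbb{R}^{2n}$). Then: (i) the set of points $x$ with $\nabla g(x)=0$ is exactly $E_1\cup E_2\cup E_3$, where $E_1=\{e^{i\theta}x^s:\theta\in\mathbb{R}\}$, $E_2=\{0\}$, and $E_3=\{x\in\mathbb{C}^n:\langle x^s,x\rangle=0,\ \|x\|=\|x^s\|/\sqrt{2}\}$; (ii) the set of points $x$ with $\nabla g(x)=0$ and $\nabla^2 g(x)\succeq 0$ (real Hessian positive semidefinite) is exactly $E_1$. In particular, $\nabla^2 g(0)\prec 0$ and, for every $x\in E_3$, the second derivative of $g$ at $x$ in the direction $x^s$ equals $-2\|x^s\|^4<0$.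
   Context: $\langle u,v\rangle=\sum_i \overline{u_i}v_i$ denotes the standard Hermitian product on $\mathbb{C}^n$ and $\|\cdot\|$ the associated Euclidean norm. (In the paper, $g$ is the expectation of the phase-retrieval loss $f(x)=\frac{1}{2m}\sum_{k=1}^m(|\langle x,v_k\rangle|^2-|\langle x^s,v_k\rangle|^2)^2$ over independent standard complex Gaussian measurement vectors $v_k$.) *)

theory Defs
  imports "HOL-Analysis.Analysis"
begin

definition herm :: "complex^'n \<Rightarrow> complex^'n \<Rightarrow> complex" where
  "herm u v = (\<Sum>i\<in>UNIV. cnj (u $ i) * v $ i)"

definition gfun :: "complex^'n \<Rightarrow> complex^'n \<Rightarrow> real" where
  "gfun xs x = norm x ^ 4 - norm x ^ 2 * norm xs ^ 2 - (cmod (herm x xs))\<^sup>2 + norm xs ^ 4"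

definition crit_point :: "('a::real_normed_vector \<Rightarrow> real) \<Rightarrow> 'a \<Rightarrow> bool" where
  "crit_point f x \<longleftrightarrow> (f has_derivative (\<lambda>h. 0)) (at x)"

text \<open>Real Hessian quadratic form h^T (Hess f)(x) h, i.e. the second derivative
  of f at x in direction h.\<close>
definition hess_form :: "('a::real_normed_vector \<Rightarrow> real) \<Rightarrow> 'a \<Rightarrow> 'a \<Rightarrow> real" where
  "hess_form f x h = deriv (deriv (\<lambda>t. f (x + t *\<^sub>R h))) 0"

definition hess_psd :: "('a::real_normed_vector \<Rightarrow> real) \<Rightarrow> 'a \<Rightarrow> bool" where
  "hess_psd f x \<longleftrightarrow> (\<forall>h. hess_form f x h \<ge> 0)"

definition hess_nd :: "('a::real_normed_vector \<Rightarrow> real) \<Rightarrow> 'a \<Rightarrow> bool" where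
  "hess_nd f x \<longleftrightarrow> (\<forall>h. h \<noteq> 0 \<longrightarrow> hess_form f x h < 0)"

definition E1 :: "complex^'n \<Rightarrow> (complex^'n) set" where
  "E1 xs = {cis \<theta> *s xs | \<theta>. True}"

definition E3 :: "complex^'n \<Rightarrow> (complex^'n) set" where
  "E3 xs = {x. herm xs x = 0 \<and> norm x = norm xs / sqrt 2}"

end

theory Submission imports Defs begin

definition tv :: "complex^'n \<Rightarrow> complex^'n" where "tv s = (-\<i>) *s s"

lemma herm_decomp: "herm x s = complex_of_real (x \<bullet> s) + \<i> * complex_of_real (x \<bullet> tv s)"
  by (rule complex_eqI) (simp_all add: herm_def inner_vec_def tv_def inner_complex_def vector_scalar_mult_def Re_sum Im_sum algebra_simps)

lemma herm_swap: "herm s x = cnj (herm x s)"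
  by (simp add: herm_def mult.commute)

lemma st0: "s \<bullet> tv s = 0"
  by (simp add: inner_vec_def tv_def inner_complex_def vector_scalar_mult_def algebra_simps)

lemma tt: "tv s \<bullet> tv s = s \<bullet> s"
  by (simp add: inner_vec_def tv_def inner_complex_def vector_scalar_mult_def algebra_simps)

lemma smult_decomp: "c *s s = Re c *\<^sub>R s - Im c *\<^sub>R tv s"
  by (rule vec_eq_iff[THEN iffD2], rule allI, rule complex_eqI) (simp_all add: tv_def vector_scalar_mult_def)

lemma g_real: "gfun s x = (x\<bullet>x)^2 - (x\<bullet>x)*(s\<bullet>s) - (x\<bullet>s)^2 - (x\<bullet>tv s)^2 + (s\<bullet>s)^2"
proof -
  have a: "norm v ^ 4 = (v\<bullet>v)^2" for v :: "complex^'n"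
    by (metis power2_norm_eq_inner power_mult numeral_Bit0 numeral_One mult_2_right one_add_one)
  have "(cmod (herm x s))^2 = (x\<bullet>s)^2 + (x \<bullet> tv s)^2"
    by (simp add: herm_decomp cmod_power2)
  then show ?thesis unfolding gfun_def a by (simp add: power2_norm_eq_inner)
qed

definition grad :: "complex^'n \<Rightarrow> complex^'n \<Rightarrow> complex^'n" where
  "grad s x = (4*(x\<bullet>x) - 2*(s\<bullet>s)) *\<^sub>R x - (2*(x\<bullet>s)) *\<^sub>R s - (2*(x\<bullet>tv s)) *\<^sub>R tv s"

lemma g_deriv: "(gfun s has_derivative (\<lambda>h. h \<bullet> grad s x)) (at x)"
proof -
  have "gfun s = (\<lambda>x. (x\<bullet>x)^2 - (x\<bullet>x)*(s\<bullet>s) - (x\<bullet>s)^2 - (x\<bullet>tv s)^2 + (s\<bullet>s)^2)"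
    using g_real by blast
  moreover have "((\<lambda>x. (x\<bullet>x)^2 - (x\<bullet>x)*(s\<bullet>s) - (x\<bullet>s)^2 - (x\<bullet>tv s)^2 + (s\<bullet>s)^2) has_derivative (\<lambda>h. h \<bullet> grad s x)) (at x)"
    apply (rule derivative_eq_intros | simp)+
    apply (simp add: grad_def inner_diff_right inner_commute algebra_simps)
    done
  ultimately show ?thesis by simp
qed

lemma crit_iff: "crit_point (gfun s) x \<longleftrightarrow> grad s x = 0"
proof
  assume "crit_point (gfun s) x"
  hence "(\<lambda>h. h \<bullet> grad s x) = (\<lambda>h. 0)"
    using has_derivative_unique g_deriv unfolding crit_point_def by blast
  hence "grad s x \<bullet> grad s x = 0" by metis
  thus "grad s x = 0" by simp
next
  assume "grad s x = 0"
  thus "crit_point (gfun s) x" using g_deriv[of s x] unfolding crit_point_def by simp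
qed

lemma hess: "hess_form (gfun s) x h = 8*(x\<bullet>h)^2 + 4*(x\<bullet>x)*(h\<bullet>h) - 2*(h\<bullet>h)*(s\<bullet>s) - 2*(h\<bullet>s)^2 - 2*(h\<bullet>tv s)^2"
proof -
  define A where "A t = (x\<bullet>x) + 2*t*(x\<bullet>h) + t^2*(h\<bullet>h)" for t
  define P where "P t = (x\<bullet>s) + t*(h\<bullet>s)" for t
  define Q where "Q t = (x\<bullet>tv s) + t*(h\<bullet>tv s)" for t
  have f: "(\<lambda>t. gfun s (x + t *\<^sub>R h)) = (\<lambda>t. (A t)^2 - A t * (s\<bullet>s) - (P t)^2 - (Q t)^2 + (s\<bullet>s)^2)"
    unfolding g_real A_def P_def Q_def
    by (rule ext) (simp add: inner_add_left inner_add_right inner_commute power2_eq_square algebra_simps)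
  define f1 where "f1 t = 2*A t*(2*(x\<bullet>h) + 2*t*(h\<bullet>h)) - (2*(x\<bullet>h) + 2*t*(h\<bullet>h))*(s\<bullet>s) - 2*P t*(h\<bullet>s) - 2*Q t*(h\<bullet>tv s)" for t
  have d1: "((\<lambda>t. (A t)^2 - A t * (s\<bullet>s) - (P t)^2 - (Q t)^2 + (s\<bullet>s)^2) has_real_derivative f1 t) (at t)" for t
    unfolding A_def P_def Q_def f1_def
    apply (rule derivative_eq_intros refl | simp add: algebra_simps)+ done
  have e1: "deriv (\<lambda>t. gfun s (x + t *\<^sub>R h)) = f1"
    unfolding f using d1 DERIV_imp_deriv by blast
  have d2: "(f1 has_real_derivative (2*(2*(x\<bullet>h))*(2*(x\<bullet>h)) + 2*A 0*(2*(h\<bullet>h)) - 2*(h\<bullet>h)*(s\<bullet>s) - 2*(h\<bullet>s)*(h\<bullet>s) - 2*(h\<bullet>tv s)*(h\<bullet>tv s))) (at 0)"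
    unfolding A_def P_def Q_def f1_def
    apply (rule derivative_eq_intros refl | simp add: algebra_simps)+ done
  show ?thesis unfolding hess_form_def e1 using DERIV_imp_deriv[OF d2]
    by (simp add: A_def power2_eq_square algebra_simps)
qed

lemma ts0: "tv s \<bullet> s = 0" using st0 inner_commute by metis

lemma bessel: "(h\<bullet>s)^2 + (h\<bullet>tv s)^2 \<le> (h\<bullet>h)*(s\<bullet>s)"
proof -
  define u where "u = (h\<bullet>s) *\<^sub>R s + (h\<bullet>tv s) *\<^sub>R tv s"
  define m where "m = (h\<bullet>s)^2 + (h\<bullet>tv s)^2"
  have hu: "h \<bullet> u = m" unfolding u_def m_def by (simp add: inner_add_right power2_eq_square)
  have uu: "u \<bullet> u = m * (s\<bullet>s)" unfolding u_def m_def
    by (simp add: inner_add_right inner_add_left st0 ts0 tt power2_eq_square algebra_simps)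
  have "(h\<bullet>u)^2 \<le> (h\<bullet>h)*(u\<bullet>u)"
    by (metis Cauchy_Schwarz_ineq)
  hence mm: "m*m \<le> (h\<bullet>h)*(s\<bullet>s)*m" using hu uu by (simp add: power2_eq_square algebra_simps)
  have m0: "m \<ge> 0" unfolding m_def by (intro add_nonneg_nonneg zero_le_power2)
  have C0: "(h\<bullet>h)*(s\<bullet>s) \<ge> 0" by (intro mult_nonneg_nonneg inner_ge_zero)
  have "m \<le> (h\<bullet>h)*(s\<bullet>s)"
  proof (cases "m = 0")
    case True thus ?thesis using C0 by simp
  next
    case False
    hence "m > 0" using m0 by simp
    thus ?thesis using mm mult_right_le_imp_le[of m m "(h\<bullet>h)*(s\<bullet>s)"] by simp
  qed
  thus ?thesis unfolding m_def .
qed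

lemma herm0: "herm s x = 0 \<longleftrightarrow> x \<bullet> s = 0 \<and> x \<bullet> tv s = 0"
  unfolding herm_swap[of s x] by (simp add: herm_decomp complex_eq_iff)

lemma E3_iff: "x \<in> E3 s \<longleftrightarrow> x \<bullet> s = 0 \<and> x \<bullet> tv s = 0 \<and> x \<bullet> x = (s\<bullet>s)/2"
proof -
  have "norm x = norm s / sqrt 2 \<longleftrightarrow> (norm x)^2 = (norm s / sqrt 2)^2"
    by (simp add: power2_eq_iff_nonneg)
  also have "\<dots> \<longleftrightarrow> x \<bullet> x = (s\<bullet>s)/2"
    by (simp add: power2_norm_eq_inner power_divide)
  finally show ?thesis unfolding E3_def herm0 by blast
qed

lemma E1_grad: assumes "x \<in> E1 s" shows "grad s x = 0" "x \<bullet> x = s \<bullet> s"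
proof -
  obtain th where x: "x = cis th *s s" using assms unfolding E1_def by blast
  define c where "c = cis th"
  have c1: "(Re c)^2 + (Im c)^2 = 1" unfolding c_def by simp
  have xe: "x = Re c *\<^sub>R s - Im c *\<^sub>R tv s" using x smult_decomp c_def by metis
  have a: "x \<bullet> s = Re c * (s\<bullet>s)" unfolding xe by (simp add: inner_diff_left ts0)
  have b: "x \<bullet> tv s = - Im c * (s\<bullet>s)" unfolding xe by (simp add: inner_diff_left st0 tt)
  have k: "x \<bullet> x = ((Re c)^2 + (Im c)^2) * (s\<bullet>s)" unfolding xe
    by (simp add: inner_diff_left inner_diff_right st0 ts0 tt power2_eq_square algebra_simps)
  show "x \<bullet> x = s \<bullet> s" using k c1 by simp
  have "grad s x = (2*(s\<bullet>s)) *\<^sub>R (x - (Re c *\<^sub>R s - Im c *\<^sub>R tv s))"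
    unfolding grad_def a b \<open>x \<bullet> x = s \<bullet> s\<close> by (simp add: algebra_simps)
  thus "grad s x = 0" using xe by simp
qed

lemma crit_cases: assumes "s \<noteq> 0" "grad s x = 0"
  shows "x \<in> E1 s \<or> x = 0 \<or> x \<in> E3 s"
proof -
  define a where "a = x \<bullet> s"
  define b where "b = x \<bullet> tv s"
  define k where "k = x \<bullet> x"
  define q where "q = s \<bullet> s"
  have q: "q > 0" using assms(1) unfolding q_def by simp
  have g: "(4*k - 2*q) *\<^sub>R x = (2*a) *\<^sub>R s + (2*b) *\<^sub>R tv s"
    using assms(2) unfolding grad_def a_def b_def k_def q_def by (simp add: algebra_simps)
  have "((4*k - 2*q) *\<^sub>R x) \<bullet> s = ((2*a) *\<^sub>R s + (2*b) *\<^sub>R tv s) \<bullet> s" using g by simp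
  hence ea: "(4*k-2*q)*a = 2*a*q" by (simp add: inner_add_left ts0 a_def q_def)
  have "((4*k - 2*q) *\<^sub>R x) \<bullet> tv s = ((2*a) *\<^sub>R s + (2*b) *\<^sub>R tv s) \<bullet> tv s" using g by simp
  hence eb: "(4*k-2*q)*b = 2*b*q" by (simp add: inner_add_left st0 tt b_def q_def)
  show ?thesis
  proof (cases "k = q")
    case True
    have xe: "x = (a/q) *\<^sub>R s + (b/q) *\<^sub>R tv s"
    proof -
      have "(2*q) *\<^sub>R x = (2*a) *\<^sub>R s + (2*b) *\<^sub>R tv s" using g True by simp
      hence "(1/(2*q)) *\<^sub>R ((2*q) *\<^sub>R x) = (1/(2*q)) *\<^sub>R ((2*a) *\<^sub>R s + (2*b) *\<^sub>R tv s)" by simp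
      thus ?thesis using q by (simp add: scaleR_add_right)
    qed
    have "k = x \<bullet> ((a/q) *\<^sub>R s + (b/q) *\<^sub>R tv s)" unfolding k_def by (rule arg_cong[of _ _ "\<lambda>y. x \<bullet> y", OF xe])
    hence "k = (a*a + b*b)/q" by (simp add: inner_add_right a_def[symmetric] b_def[symmetric] add_divide_distrib)
    hence ab: "a*a + b*b = q*q" using True q by (simp add: field_simps)
    define c where "c = Complex (a/q) (-(b/q))"
    have "(cmod c)^2 = 1" unfolding c_def cmod_power2 using ab q
      by (simp add: power2_eq_square field_simps)
    hence cm: "cmod c = 1" using norm_ge_zero[of c] by (auto simp: power2_eq_1_iff)
    have "c \<noteq> 0" using cm by auto
    hence "cis (Arg c) = c" using cis_Arg[of c] cm by (simp add: sgn_div_norm)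
    moreover have "c *s s = x" unfolding smult_decomp c_def xe by simp
    ultimately have "x \<in> E1 s" unfolding E1_def by (metis (mono_tags, lifting) mem_Collect_eq)
    thus ?thesis by blast
  next
    case False
    have "(4*k-4*q)*a = 0" using ea by (simp add: algebra_simps)
    hence a0: "a = 0" using False by simp
    have "(4*k-4*q)*b = 0" using eb by (simp add: algebra_simps)
    hence b0: "b = 0" using False by simp
    have "(4*k - 2*q) *\<^sub>R x = 0" using g a0 b0 by simp
    hence "x = 0 \<or> 4*k - 2*q = 0" by auto
    hence "x = 0 \<or> x \<bullet> x = (s \<bullet> s)/2" unfolding k_def q_def by linarith
    moreover have "x \<bullet> s = 0" "x \<bullet> tv s = 0" using a0 b0 unfolding a_def b_def by auto
    ultimately show ?thesis unfolding E3_iff by blast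
  qed
qed

lemma grad0: "grad s 0 = 0" by (simp add: grad_def)

lemma E3_grad: "x \<in> E3 s \<Longrightarrow> grad s x = 0"
  unfolding E3_iff grad_def by simp

lemma E3_hess: "x \<in> E3 s \<Longrightarrow> hess_form (gfun s) x s = - 2 * (s\<bullet>s)^2"
  unfolding E3_iff hess by (simp add: st0 power2_eq_square)

lemma hess0: "hess_form (gfun s) 0 h = - 2*(h\<bullet>h)*(s\<bullet>s) - 2*(h\<bullet>s)^2 - 2*(h\<bullet>tv s)^2"
  unfolding hess by simp

lemma norm4: "norm (v::complex^'n) ^ 4 = (v\<bullet>v)^2"
  by (metis power2_norm_eq_inner power_mult numeral_Bit0 numeral_One mult_2_right one_add_one)

theorem mainTheorem2:
  fixes xs :: "complex^'n"
  assumes "xs \<noteq> 0"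
  shows "{x. crit_point (gfun xs) x} = E1 xs \<union> {0} \<union> E3 xs
    \<and> {x. crit_point (gfun xs) x \<and> hess_psd (gfun xs) x} = E1 xs
    \<and> hess_nd (gfun xs) 0
    \<and> (\<forall>x\<in>E3 xs. hess_form (gfun xs) x xs = - 2 * norm xs ^ 4)"
proof -
  have q: "xs \<bullet> xs > 0" using assms by simp
  have A: "{x. crit_point (gfun xs) x} = E1 xs \<union> {0} \<union> E3 xs"
    using crit_cases[OF assms] E1_grad(1) E3_grad grad0 unfolding crit_iff by blast
  have neg0: "hess_form (gfun xs) 0 xs < 0"
    unfolding hess0 using q by (simp add: st0 power2_eq_square)
  have negE3: "hess_form (gfun xs) x xs < 0" if "x \<in> E3 xs" for x
    using E3_hess[OF that] q by simp
  have psdE1: "hess_psd (gfun xs) x" if "x \<in> E1 xs" for x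
    unfolding hess_psd_def
  proof
    fix h
    show "hess_form (gfun xs) x h \<ge> 0"
      unfolding hess E1_grad(2)[OF that] using bessel[of h xs] zero_le_power2[of "x\<bullet>h"]
        mult.commute[of "h\<bullet>h" "xs\<bullet>xs"] by linarith
  qed
  have B: "{x. crit_point (gfun xs) x \<and> hess_psd (gfun xs) x} = E1 xs"
  proof (rule set_eqI, rule iffI)
    fix x assume "x \<in> {x. crit_point (gfun xs) x \<and> hess_psd (gfun xs) x}"
    hence c: "crit_point (gfun xs) x" and p: "hess_psd (gfun xs) x" by auto
    have "hess_form (gfun xs) x xs \<ge> 0" using p unfolding hess_psd_def by blast
    thus "x \<in> E1 xs" using c A neg0 negE3 by fastforce
  next
    fix x assume "x \<in> E1 xs"
    thus "x \<in> {x. crit_point (gfun xs) x \<and> hess_psd (gfun xs) x}"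
      using psdE1 A by blast
  qed
  have C: "hess_nd (gfun xs) 0"
    unfolding hess_nd_def
  proof (intro allI impI)
    fix h :: "complex^'n" assume "h \<noteq> 0"
    hence "h \<bullet> h > 0" by simp
    hence "(h\<bullet>h)*(xs\<bullet>xs) > 0" using q by simp
    thus "hess_form (gfun xs) 0 h < 0" unfolding hess0
      using zero_le_power2[of "h\<bullet>xs"] zero_le_power2[of "h\<bullet>tv xs"] by linarith
  qed
  have D: "\<forall>x\<in>E3 xs. hess_form (gfun xs) x xs = - 2 * norm xs ^ 4"
    using E3_hess norm4 by metis
  show ?thesis using A B C D by blast
qed

end
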